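(* Let $m\geq4$ be an integer, let $G$ be an $m$-free digraph, let $v\in V(G)$ and let $k$ be an integer with $1\leq k\leq m-3$. Put $V_1=\bigcup_{i=1}^{k+1}N_i^-(v)$ and $V_2=V(G)\setminus V_1$. Then the set of edges of $G$ from $V_2$ to $V_1$ equals $E(N^-_{k+2}(v),N^-_{k+1}(v))$, so it has exactly $r'_k(v)$ elements, and the number of pairs $(a,b)\in V_1\times V_2$ such that neither $(a,b)$ nor $(b,a)$ is an edge is at least $t_k(v)$.
   Context: All digraphs are finite, without loops and without parallel edges. A digraph is $m$-free if it has no directed cycle of length at most $m$. For a vertex $v$ and $i\geq 0$, $N_i^+(v)$ is the set of vertices $u$ such that the shortest directed path from $v$ to $u$ has length exactly $i$, and $N_i^-(v)$ is the set of vertices $u$ such that the shortest directed path from $u$ to $v$ has length exactly $i$. For $A,B\subseteq V(G)$, $E(A,B)$ is the set of edges $(a,b)$ with $a\in A$, $b\in B$. A directed path $(v_0,\dots,v_k)$ consists of distinct vertices with $(v_i,v_{i+1})$ an edge for each $i$; its length is $k$. It is induced if every edge of $G$ with both ends in $\{v_0,\dots,v_k\}$ is one of the edges $(v_i,v_{i+1})$; it is a shortest induced directed path if it is induced and $v_k\in N_k^+(v_0)$. Let $\mathscr{P}(G)$ be the set of shortest induced directed paths of $G$. For an integer $k\geq1$ and $v\in V(G)$: $Q_k(v)$ (resp. $R_k(v)$) is the set of triples $(x,y,z)$ of vertices for which there exist vertices $w_1,\dots,w_k$ with $(x,w_1,\dots,w_k,y,z)\in\mathscr{P}(G)$ and $y=v$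 (resp. $z=v$). $R'_k(v)$ is the set of triples $(x,y,z)$ for which there exist $w_1,\dots,w_k$ with $(x,y,w_1,\dots,w_k,z)\in\mathscr{P}(G)$ and $z=v$. $q_k(v)=|Q_k(v)|$, $r_k(v)=|R_k(v)|$, $r'_k(v)=|R'_k(v)|$. For $1\leq k\leq m-3$: $t_k(v)=\sum_{i=k}^{m-3}r_i(v)+\sum_{i=1}^{k}q_i(v)$. *)

theory Defs
  imports Main
begin

definition digraph :: "'a set \<Rightarrow> ('a \<times> 'a) set \<Rightarrow> bool" where
  "digraph V E \<longleftrightarrow> finite V \<and> E \<subseteq> V \<times> V \<and> (\<forall>x. (x, x) \<notin> E)"

text \<open>Directed path given by its vertex list (v_0, ..., v_k); its length is k.\<close>
definition dpath :: "'a set \<Rightarrow> ('a \<times> 'a) set \<Rightarrow> 'a list \<Rightarrow> bool" where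
  "dpath V E xs \<longleftrightarrow> xs \<noteq> [] \<and> distinct xs \<and> set xs \<subseteq> V \<and>
     (\<forall>i. Suc i < length xs \<longrightarrow> (xs ! i, xs ! Suc i) \<in> E)"

text \<open>Directed cycle on the vertex list xs (distinct vertices, closing edge last -> first);
its length is length xs.\<close>
definition dcycle :: "'a set \<Rightarrow> ('a \<times> 'a) set \<Rightarrow> 'a list \<Rightarrow> bool" where
  "dcycle V E xs \<longleftrightarrow> dpath V E xs \<and> (last xs, hd xs) \<in> E"

definition m_free :: "nat \<Rightarrow> 'a set \<Rightarrow> ('a \<times> 'a) set \<Rightarrow> bool" where
  "m_free m V E \<longleftrightarrow> \<not> (\<exists>xs. dcycle V E xs \<and> length xs \<le> m)"

definition path_len :: "'a set \<Rightarrow> ('a \<times> 'a) set \<Rightarrow> 'a \<Rightarrow> 'a \<Rightarrow> nat \<Rightarrow> bool" where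
  "path_len V E u w i \<longleftrightarrow> (\<exists>xs. dpath V E xs \<and> hd xs = u \<and> last xs = w \<and> length xs = Suc i)"

definition dist_is :: "'a set \<Rightarrow> ('a \<times> 'a) set \<Rightarrow> 'a \<Rightarrow> 'a \<Rightarrow> nat \<Rightarrow> bool" where
  "dist_is V E u w i \<longleftrightarrow> path_len V E u w i \<and> (\<forall>j<i. \<not> path_len V E u w j)"

definition Nout :: "'a set \<Rightarrow> ('a \<times> 'a) set \<Rightarrow> nat \<Rightarrow> 'a \<Rightarrow> 'a set" where
  "Nout V E i v = {u \<in> V. dist_is V E v u i}"

definition Nin :: "'a set \<Rightarrow> ('a \<times> 'a) set \<Rightarrow> nat \<Rightarrow> 'a \<Rightarrow> 'a set" where
  "Nin V E i v = {u \<in> V. dist_is V E u v i}"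

definition induced_path :: "'a set \<Rightarrow> ('a \<times> 'a) set \<Rightarrow> 'a list \<Rightarrow> bool" where
  "induced_path V E xs \<longleftrightarrow> dpath V E xs \<and>
     (\<forall>i j. i < length xs \<longrightarrow> j < length xs \<longrightarrow> (xs ! i, xs ! j) \<in> E \<longrightarrow> j = Suc i)"

definition SIP :: "'a set \<Rightarrow> ('a \<times> 'a) set \<Rightarrow> 'a list set" where
  "SIP V E = {xs. induced_path V E xs \<and> last xs \<in> Nout V E (length xs - 1) (hd xs)}"

definition Qset :: "'a set \<Rightarrow> ('a \<times> 'a) set \<Rightarrow> nat \<Rightarrow> 'a \<Rightarrow> ('a \<times> 'a \<times> 'a) set" where
  "Qset V E k v = {(x, y, z). \<exists>ws. length ws = k \<and> x # ws @ [y, z] \<in> SIP V E \<and> y = v}"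

definition Rset :: "'a set \<Rightarrow> ('a \<times> 'a) set \<Rightarrow> nat \<Rightarrow> 'a \<Rightarrow> ('a \<times> 'a \<times> 'a) set" where
  "Rset V E k v = {(x, y, z). \<exists>ws. length ws = k \<and> x # ws @ [y, z] \<in> SIP V E \<and> z = v}"

definition R'set :: "'a set \<Rightarrow> ('a \<times> 'a) set \<Rightarrow> nat \<Rightarrow> 'a \<Rightarrow> ('a \<times> 'a \<times> 'a) set" where
  "R'set V E k v = {(x, y, z). \<exists>ws. length ws = k \<and> x # y # ws @ [z] \<in> SIP V E \<and> z = v}"

definition qk :: "'a set \<Rightarrow> ('a \<times> 'a) set \<Rightarrow> nat \<Rightarrow> 'a \<Rightarrow> nat" where
  "qk V E k v = card (Qset V E k v)"

definition rk :: "'a set \<Rightarrow> ('a \<times> 'a) set \<Rightarrow> nat \<Rightarrow> 'a \<Rightarrow> nat" where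
  "rk V E k v = card (Rset V E k v)"

definition r'k :: "'a set \<Rightarrow> ('a \<times> 'a) set \<Rightarrow> nat \<Rightarrow> 'a \<Rightarrow> nat" where
  "r'k V E k v = card (R'set V E k v)"

definition tk :: "nat \<Rightarrow> 'a set \<Rightarrow> ('a \<times> 'a) set \<Rightarrow> nat \<Rightarrow> 'a \<Rightarrow> nat" where
  "tk m V E k v = (\<Sum>i = k..m - 3. rk V E i v) + (\<Sum>i = 1..k. qk V E i v)"

definition Eset :: "('a \<times> 'a) set \<Rightarrow> 'a set \<Rightarrow> 'a set \<Rightarrow> ('a \<times> 'a) set" where
  "Eset E A B = {(a, b) \<in> E. a \<in> A \<and> b \<in> B}"

end

theory Submission imports Defs begin

lemma dpath_sub:
  assumes "dpath V E xs" "j \<le> i" "i < length xs"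
  shows "dpath V E (drop j (take (Suc i) xs))"
    and "hd (drop j (take (Suc i) xs)) = xs ! j"
    and "last (drop j (take (Suc i) xs)) = xs ! i"
    and "length (drop j (take (Suc i) xs)) = Suc i - j"
proof -
  have len: "length (drop j (take (Suc i) xs)) = Suc i - j" using assms by simp
  have nth: "\<And>l. l < Suc i - j \<Longrightarrow> drop j (take (Suc i) xs) ! l = xs ! (j + l)"
    using assms by simp
  show "length (drop j (take (Suc i) xs)) = Suc i - j" by (rule len)
  show "dpath V E (drop j (take (Suc i) xs))"
    unfolding dpath_def
  proof (intro conjI allI impI)
    show "drop j (take (Suc i) xs) \<noteq> []" using len assms by auto
    show "distinct (drop j (take (Suc i) xs))" using assms(1) by (simp add: dpath_def)
    show "set (drop j (take (Suc i) xs)) \<subseteq> V" using assms(1) unfolding dpath_def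
      by (meson dual_order.trans set_drop_subset set_take_subset)
    fix l assume l: "Suc l < length (drop j (take (Suc i) xs))"
    then have "(xs ! (j + l), xs ! Suc (j + l)) \<in> E" using assms unfolding dpath_def by auto
    then show "(drop j (take (Suc i) xs) ! l, drop j (take (Suc i) xs) ! Suc l) \<in> E"
      using nth[of l] nth[of "Suc l"] l len by simp
  qed
  show "hd (drop j (take (Suc i) xs)) = xs ! j"
    using assms by (simp add: hd_drop_conv_nth)
  show "last (drop j (take (Suc i) xs)) = xs ! i"
    using assms len nth[of "i - j"] by (simp add: last_conv_nth)
qed

lemma path_len_sub:
  assumes "dpath V E xs" "j \<le> i" "i < length xs"
  shows "path_len V E (xs ! j) (xs ! i) (i - j)"
  unfolding path_len_def using dpath_sub[OF assms] assms by (intro exI[of _ "drop j (take (Suc i) xs)"]) auto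

lemma path_len0: "path_len V E u w 0 \<Longrightarrow> u = w"
  unfolding path_len_def by (auto simp: length_Suc_conv)

lemma dist_unique: "dist_is V E u w i \<Longrightarrow> dist_is V E u w j \<Longrightarrow> i = j"
  unfolding dist_is_def by (meson linorder_neqE_nat)

lemma dist_exists:
  assumes "path_len V E u w n" shows "\<exists>d\<le>n. dist_is V E u w d"
proof -
  let ?d = "LEAST l. path_len V E u w l"
  have "path_len V E u w ?d" using assms by (rule LeastI)
  moreover have "\<forall>j<?d. \<not> path_len V E u w j" using not_less_Least by blast
  moreover have "?d \<le> n" using assms by (rule Least_le)
  ultimately show ?thesis unfolding dist_is_def by blast
qed

lemma edge_pre:
  assumes "(a, b) \<in> E" "E \<subseteq> V \<times> V" "path_len V E b w i"
  shows "\<exists>j\<le>Suc i. path_len V E a w j"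
proof -
  obtain ys where ys: "dpath V E ys" "hd ys = b" "last ys = w" "length ys = Suc i"
    using assms(3) unfolding path_len_def by blast
  show ?thesis
  proof (cases "a \<in> set ys")
    case True
    then obtain p where p: "p < length ys" "ys ! p = a" by (auto simp: in_set_conv_nth)
    have "path_len V E (ys ! p) (ys ! i) (i - p)"
      using path_len_sub[OF ys(1), of p i] p ys by simp
    moreover have "ys ! i = w" using ys last_conv_nth[of ys] by (cases "ys = []") auto
    ultimately show ?thesis using p by (intro exI[of _ "i - p"]) auto
  next
    case False
    have "a \<in> V" using assms by auto
    have "dpath V E (a # ys)"
      unfolding dpath_def
    proof (intro conjI allI impI)
      show "distinct (a # ys)" using False ys(1) by (simp add: dpath_def)
      show "set (a # ys) \<subseteq> V" using \<open>a \<in> V\<close> ys(1) by (simp add: dpath_def)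
      fix l assume l: "Suc l < length (a # ys)"
      show "((a # ys) ! l, (a # ys) ! Suc l) \<in> E"
      proof (cases l)
        case 0 then show ?thesis using assms(1) ys by (cases ys) auto
      next
        case (Suc l') then show ?thesis using l ys(1) by (auto simp: dpath_def)
      qed
    qed simp
    then have "path_len V E a w (Suc i)" unfolding path_len_def using ys
      by (intro exI[of _ "a # ys"]) (auto)
    then show ?thesis by blast
  qed
qed

lemma edge_post:
  assumes "(b, c) \<in> E" "E \<subseteq> V \<times> V" "path_len V E a b i"
  shows "\<exists>j\<le>Suc i. path_len V E a c j"
proof -
  obtain ys where ys: "dpath V E ys" "hd ys = a" "last ys = b" "length ys = Suc i"
    using assms(3) unfolding path_len_def by blast
  show ?thesis
  proof (cases "c \<in> set ys")
    case True
    then obtain p where p: "p < length ys" "ys ! p = c" by (auto simp: in_set_conv_nth)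
    have "path_len V E (ys ! 0) (ys ! p) (p - 0)"
      using path_len_sub[OF ys(1), of 0 p] p ys by simp
    moreover have "ys ! 0 = a" using ys hd_conv_nth[of ys] by (cases "ys = []") auto
    ultimately show ?thesis using p ys by (intro exI[of _ "p"]) auto
  next
    case False
    have "c \<in> V" using assms by auto
    have ne: "ys \<noteq> []" using ys by auto
    have "dpath V E (ys @ [c])"
      unfolding dpath_def
    proof (intro conjI allI impI)
      show "distinct (ys @ [c])" using False ys(1) by (simp add: dpath_def)
      show "set (ys @ [c]) \<subseteq> V" using \<open>c \<in> V\<close> ys(1) by (simp add: dpath_def)
      fix l assume l: "Suc l < length (ys @ [c])"
      show "((ys @ [c]) ! l, (ys @ [c]) ! Suc l) \<in> E"
      proof (cases "Suc l < length ys")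
        case True then show ?thesis using ys(1) by (auto simp: dpath_def nth_append)
      next
        case False
        then have "l = length ys - 1" using l by simp
        then show ?thesis using assms(1) ys ne False by (auto simp: nth_append last_conv_nth)
      qed
    qed simp
    then have "path_len V E a c (Suc i)" unfolding path_len_def using ys ne
      by (intro exI[of _ "ys @ [c]"]) (auto)
    then show ?thesis by blast
  qed
qed

lemma cycle_false:
  assumes "m_free m V E" "(a, b) \<in> E" "path_len V E b a i" "Suc i \<le> m"
  shows False
proof -
  obtain xs where xs: "dpath V E xs" "hd xs = b" "last xs = a" "length xs = Suc i"
    using assms(3) unfolding path_len_def by blast
  have "dcycle V E xs" unfolding dcycle_def using xs assms by simp
  then show False using assms(1) xs assms(4) unfolding m_free_def by auto
qed

lemma induced_if_shortest:
  assumes "m_free m V E" "dpath V E xs" "length xs \<le> m"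
    and short: "\<forall>l < length xs - 1. \<not> path_len V E (hd xs) (last xs) l"
  shows "induced_path V E xs"
  unfolding induced_path_def
proof (intro conjI allI impI)
  show "dpath V E xs" by fact
  fix i j assume ij: "i < length xs" "j < length xs" and e: "(xs ! i, xs ! j) \<in> E"
  show "j = Suc i"
  proof (rule ccontr)
    assume ne: "j \<noteq> Suc i"
    show False
    proof (cases "j \<le> i")
      case True
      have "path_len V E (xs ! j) (xs ! i) (i - j)" using path_len_sub[OF assms(2) True ij(1)] .
      moreover have "Suc (i - j) \<le> m" using ij assms(3) True by simp
      ultimately show False using cycle_false[OF assms(1) e] by blast
    next
      case False
      then have lt: "Suc i < j" using ne by simp
      define ys where "ys = take (Suc i) xs @ drop j xs"
      have lys: "length ys = Suc i + (length xs - j)" using ij lt by (simp add: ys_def)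
      have nth1: "\<And>l. l \<le> i \<Longrightarrow> ys ! l = xs ! l" using ij lt by (simp add: ys_def nth_append)
      have nth2: "\<And>l. Suc i \<le> l \<Longrightarrow> l < length ys \<Longrightarrow> ys ! l = xs ! (j + l - Suc i)"
        using ij lt by (simp add: ys_def nth_append)
      have dp: "dpath V E ys" unfolding dpath_def
      proof (intro conjI allI impI)
        show "ys \<noteq> []" using lys by auto
        have "distinct xs" using assms(2) by (simp add: dpath_def)
        moreover have "set (take (Suc i) xs) \<inter> set (drop j xs) = {}"
          using set_take_disj_set_drop_if_distinct[OF \<open>distinct xs\<close>, of "Suc i" j] lt by simp
        ultimately show "distinct ys" unfolding ys_def by simp
        have "set ys \<subseteq> set xs" unfolding ys_def using set_take_subset set_drop_subset by fastforce
        then show "set ys \<subseteq> V" using assms(2) unfolding dpath_def by blast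
        fix l assume l: "Suc l < length ys"
        show "(ys ! l, ys ! Suc l) \<in> E"
        proof (cases "l < i")
          case True
          then have "ys ! l = xs ! l" "ys ! Suc l = xs ! Suc l" using nth1[of l] nth1[of "Suc l"] by auto
          moreover have "Suc l < length xs" using True ij by simp
          ultimately show ?thesis using assms(2) unfolding dpath_def by simp
        next
          case False
          show ?thesis
          proof (cases "l = i")
            case True then show ?thesis using nth1[of l] nth2[of "Suc l"] l e by simp
          next
            case False
            then have "Suc i \<le> l" using \<open>\<not> l < i\<close> by simp
            have eq: "j + Suc l - Suc i = Suc (j + l - Suc i)" using \<open>Suc i \<le> l\<close> by simp
            have "ys ! l = xs ! (j + l - Suc i)" using nth2[of l] l \<open>Suc i \<le> l\<close> by simp
            moreover have "ys ! Suc l = xs ! (j + Suc l - Suc i)" using nth2[of "Suc l"] l \<open>Suc i \<le> l\<close> by simp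
            ultimately have "ys ! l = xs ! (j + l - Suc i)" "ys ! Suc l = xs ! Suc (j + l - Suc i)"
              using eq by simp_all
            moreover have "Suc (j + l - Suc i) < length xs" using l lys \<open>Suc i \<le> l\<close> by simp
            ultimately show ?thesis using assms(2) by (simp add: dpath_def)
          qed
        qed
      qed
      have "hd ys = xs ! 0" using nth1[of 0] lys hd_conv_nth[of ys] by (cases "ys = []") auto
      also have "xs ! 0 = hd xs" using ij hd_conv_nth[of xs] by (cases "xs = []") auto
      finally have "hd ys = hd xs" .
      moreover have "last ys = last xs" using ij by (simp add: ys_def)
      ultimately have "path_len V E (hd xs) (last xs) (length ys - 1)"
        unfolding path_len_def using dp lys by (intro exI[of _ ys]) auto
      moreover have "length ys - 1 < length xs - 1" using lys lt ij by simp
      ultimately show False using short by blast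
    qed
  qed
qed


lemma dpath_Cons:
  assumes "dpath V E ys" "hd ys = b" "(a, b) \<in> E" "a \<in> V" "a \<notin> set ys"
  shows "dpath V E (a # ys)"
  unfolding dpath_def
proof (intro conjI allI impI)
  show "distinct (a # ys)" using assms by (simp add: dpath_def)
  show "set (a # ys) \<subseteq> V" using assms by (simp add: dpath_def)
  fix l assume l: "Suc l < length (a # ys)"
  show "((a # ys) ! l, (a # ys) ! Suc l) \<in> E"
  proof (cases l)
    case 0 then show ?thesis using assms by (cases ys) (auto simp: dpath_def)
  next
    case (Suc l') then show ?thesis using l assms(1) by (auto simp: dpath_def)
  qed
qed simp

theorem mainTheorem8:
  fixes V :: "'a set" and E :: "('a \<times> 'a) set" and m k :: nat and v :: 'a
  assumes "m \<ge> 4" and "digraph V E" and "m_free m V E" and "v \<in> V"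
    and "1 \<le> k" and "k \<le> m - 3"
  shows "let V1 = (\<Union>i\<in>{1..k+1}. Nin V E i v); V2 = V - V1 in
     Eset E V2 V1 = Eset E (Nin V E (k+2) v) (Nin V E (k+1) v) \<and>
     card (Eset E V2 V1) = r'k V E k v \<and>
     tk m V E k v \<le> card {(a, b) \<in> V1 \<times> V2. (a, b) \<notin> E \<and> (b, a) \<notin> E}"
proof -
  define V1 where "V1 = (\<Union>i\<in>{1..k+1}. Nin V E i v)"
  define V2 where "V2 = V - V1"
  define P where "P = {(a, b) \<in> V1 \<times> V2. (a, b) \<notin> E \<and> (b, a) \<notin> E}"
  have EV: "E \<subseteq> V \<times> V" and finV: "finite V" using assms(2) by (auto simp: digraph_def)
  have mf: "m_free m V E" by fact
  have V1_iff: "\<And>x. x \<in> V1 \<longleftrightarrow> x \<in> V \<and> (\<exists>i. 1 \<le> i \<and> i \<le> k+1 \<and> dist_is V E x v i)"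
    by (auto simp: V1_def Nin_def)
  have km: "k + 3 \<le> m" using assms by simp
  have part1: "Eset E V2 V1 = Eset E (Nin V E (k+2) v) (Nin V E (k+1) v)"
  proof (rule set_eqI, rule iffI)
    fix e assume "e \<in> Eset E V2 V1"
    then obtain a b where e: "e = (a,b)" "(a,b) \<in> E" "a \<in> V2" "b \<in> V1" by (auto simp: Eset_def)
    then obtain i where i: "1 \<le> i" "i \<le> k+1" "dist_is V E b v i" "b \<in> V" using V1_iff by blast
    have pb: "path_len V E b v i" using i(3) by (simp add: dist_is_def)
    then obtain j where j: "j \<le> Suc i" "path_len V E a v j" using edge_pre[OF e(2) EV] by blast
    obtain d where d: "d \<le> j" "dist_is V E a v d" using dist_exists[OF j(2)] by blast
    have aV: "a \<in> V" "a \<notin> V1" using e(3) by (auto simp: V2_def)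
    have "d \<noteq> 0"
    proof
      assume "d = 0"
      then have "a = v" using d(2) path_len0 by (auto simp: dist_is_def)
      then have pba: "path_len V E b a i" using pb by simp
      have "Suc i \<le> m" using i km by linarith
      then show False using cycle_false[OF mf e(2) pba] by blast
    qed
    moreover have "\<not> (d \<le> k+1)"
    proof
      assume "d \<le> k+1"
      moreover have "1 \<le> d" using \<open>d \<noteq> 0\<close> by simp
      ultimately have "a \<in> V1" using V1_iff aV(1) d(2) by blast
      then show False using aV by simp
    qed
    ultimately have "d = k+2" "i = k+1" using d(1) j(1) i(2) by linarith+
    then show "e \<in> Eset E (Nin V E (k+2) v) (Nin V E (k+1) v)" using e i d aV
      by (auto simp: Eset_def Nin_def)
  next
    fix e assume "e \<in> Eset E (Nin V E (k+2) v) (Nin V E (k+1) v)"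
    then obtain a b where e: "e=(a,b)" "(a,b)\<in>E" "a \<in> V" "dist_is V E a v (k+2)" "b \<in> V"
      "dist_is V E b v (k+1)" by (auto simp: Eset_def Nin_def)
    have "a \<notin> V1"
    proof
      assume "a \<in> V1"
      then obtain i where "i \<le> k+1" "dist_is V E a v i" using V1_iff by blast
      then show False using dist_unique[OF e(4), of i] by simp
    qed
    moreover have "b \<in> V1" using V1_iff e by auto
    ultimately show "e \<in> Eset E V2 V1" using e by (auto simp: Eset_def V2_def)
  qed
  have part2: "R'set V E k v = (\<lambda>(x,y). (x,y,v)) ` Eset E (Nin V E (k+2) v) (Nin V E (k+1) v)"
  proof (rule set_eqI, rule iffI)
    fix t assume "t \<in> R'set V E k v"
    then obtain x y ws where t: "t = (x,y,v)" "length ws = k" "x # y # ws @ [v] \<in> SIP V E"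
      by (auto simp: R'set_def)
    define xs where "xs = x # y # ws @ [v]"
    have ind: "induced_path V E xs" and dx: "dist_is V E x v (k+2)"
      using t(2,3) by (auto simp: SIP_def Nout_def xs_def)
    have dp: "dpath V E xs" using ind by (simp add: induced_path_def)
    have len: "length xs = k + 3" using t(2) by (simp add: xs_def)
    have xV: "x \<in> V" "y \<in> V" using dp by (auto simp: dpath_def xs_def)
    have "(xs ! 0, xs ! Suc 0) \<in> E" using dp len unfolding dpath_def by simp
    then have exy: "(x,y) \<in> E" by (simp add: xs_def)
    have py: "path_len V E y v (k+1)"
      using path_len_sub[OF dp, of 1 "Suc (Suc k)"] len t(2) by (simp add: xs_def nth_append)
    obtain d where d: "d \<le> k+1" "dist_is V E y v d" using dist_exists[OF py] by blast
    have pd: "path_len V E y v d" using d(2) by (simp add: dist_is_def)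
    obtain j where j: "j \<le> Suc d" "path_len V E x v j" using edge_pre[OF exy EV pd] by blast
    have "\<not> j < k + 2" using dx j(2) unfolding dist_is_def by blast
    then have "d = k+1" using d j by simp
    then show "t \<in> (\<lambda>(x,y). (x,y,v)) ` Eset E (Nin V E (k+2) v) (Nin V E (k+1) v)"
      unfolding t(1) using xV exy dx d
      by (intro image_eqI[of _ _ "(x,y)"]) (auto simp: Eset_def Nin_def)
  next
    fix t assume "t \<in> (\<lambda>(x,y). (x,y,v)) ` Eset E (Nin V E (k+2) v) (Nin V E (k+1) v)"
    then obtain x y where t: "t = (x,y,v)" "(x,y) \<in> E" "x \<in> V" "dist_is V E x v (k+2)"
      "y \<in> V" "dist_is V E y v (k+1)"
      by (auto simp: Eset_def Nin_def)
    obtain ys where ys: "dpath V E ys" "hd ys = y" "last ys = v" "length ys = k+2"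
      using t(6) by (auto simp: dist_is_def path_len_def)
    have yv: "ys ! (k+1) = v" using ys last_conv_nth[of ys] by (cases "ys = []") auto
    have xn: "x \<notin> set ys"
    proof
      assume "x \<in> set ys"
      then obtain p where p: "p < length ys" "ys ! p = x" by (auto simp: in_set_conv_nth)
      have "path_len V E (ys ! p) (ys ! (k+1)) (k+1-p)"
        using path_len_sub[OF ys(1), of p "k+1"] p ys by simp
      then have "path_len V E x v (k+1-p)" using p yv by simp
      moreover have "k+1-p < k+2" by simp
      ultimately show False using t(4) unfolding dist_is_def by blast
    qed
    have dxs: "dpath V E (x # ys)" using dpath_Cons[OF ys(1,2) t(2,3) xn] .
    have ne: "ys \<noteq> []" using ys by auto
    have ind: "induced_path V E (x # ys)"
      by (rule induced_if_shortest[OF mf dxs]) (use km ys t(4) ne in \<open>auto simp: dist_is_def\<close>)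
    obtain a rest where ar: "ys = a # rest" using ne by (cases ys) auto
    have rne: "rest \<noteq> []" using ys ar by auto
    define ws where "ws = butlast rest"
    have ay: "a = y" using ar ys(2) by simp
    have lr: "last rest = v" using ar rne ys(3) by simp
    have yseq: "ys = y # ws @ [v]" unfolding ws_def using ar ay lr append_butlast_last_id[OF rne] by simp
    have lws: "length ws = k" using yseq ys by simp
    have "x # y # ws @ [v] \<in> SIP V E"
      using ind assms(4) t(4) ys yseq[symmetric] by (auto simp: SIP_def Nout_def)
    then show "t \<in> R'set V E k v" using lws t(1) by (auto simp: R'set_def)
  qed
  have cardR': "r'k V E k v = card (Eset E (Nin V E (k+2) v) (Nin V E (k+1) v))"
    unfolding r'k_def part2 by (rule card_image) (auto simp: inj_on_def)
  have V1V: "V1 \<subseteq> V" using V1_iff by blast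
  have finP: "finite P"
  proof (rule finite_subset)
    show "P \<subseteq> V \<times> V" using V1V by (auto simp: P_def V2_def)
    show "finite (V \<times> V)" using finV by simp
  qed
  have RF: "z = v \<and> dist_is V E y v 1 \<and> dist_is V E x v (i+2) \<and> (y,x) \<in> P"
    if ki: "k \<le> i" and mem: "(x,y,z) \<in> Rset V E i v" for i x y z
  proof -
    obtain ws where ws: "length ws = i" "x # ws @ [y, z] \<in> SIP V E" "z = v"
      using mem by (auto simp: Rset_def)
    define xs where "xs = x # ws @ [y, z]"
    have ind: "induced_path V E xs" and dx: "dist_is V E x z (i+2)"
      using ws(1,2) by (auto simp: SIP_def Nout_def xs_def)
    have dp: "dpath V E xs" using ind by (simp add: induced_path_def)
    have indI: "\<And>a b. a < length xs \<Longrightarrow> b < length xs \<Longrightarrow> (xs!a, xs!b) \<in> E \<Longrightarrow> b = Suc a"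
      using ind unfolding induced_path_def by blast
    have len: "length xs = i + 3" using ws by (simp add: xs_def)
    have n0: "xs ! 0 = x" and n1: "xs ! (Suc i) = y" and n2: "xs ! Suc (Suc i) = v"
      using ws by (simp_all add: xs_def nth_append)
    have "(xs ! Suc i, xs ! Suc (Suc i)) \<in> E" using dp len unfolding dpath_def by simp
    then have yv: "(y,v) \<in> E" using n1 n2 by simp
    have yV: "y \<in> V" "x \<in> V" using dp by (auto simp: dpath_def xs_def)
    have "y \<noteq> v" using dp ws by (auto simp: dpath_def xs_def)
    have "path_len V E (xs ! Suc i) (xs ! Suc (Suc i)) (Suc (Suc i) - Suc i)"
      using path_len_sub[OF dp, of "Suc i" "Suc (Suc i)"] len by simp
    then have p1: "path_len V E y v 1" using n1 n2 by simp
    have "\<not> path_len V E y v 0" using path_len0[of V E y v] \<open>y \<noteq> v\<close> by blast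
    then have dy: "dist_is V E y v 1" using p1 by (simp add: dist_is_def)
    have ne1: "(x,y) \<notin> E"
    proof
      assume "(x,y) \<in> E"
      then have "(xs!0, xs!Suc i) \<in> E" using n0 n1 by simp
      then have "Suc i = Suc 0" using indI[of 0 "Suc i"] len by simp
      then show False using ki assms(5) by simp
    qed
    have ne2: "(y,x) \<notin> E"
    proof
      assume "(y,x) \<in> E"
      then have "(xs!Suc i, xs!0) \<in> E" using n0 n1 by simp
      then have "0 = Suc (Suc i)" using indI[of "Suc i" 0] len by simp
      then show False by simp
    qed
    have y1: "y \<in> V1" using V1_iff yV dy by auto
    have x2: "x \<notin> V1"
    proof
      assume "x \<in> V1"
      then obtain j where j: "j \<le> k+1" "dist_is V E x v j" using V1_iff by blast
      have "j = i + 2" using dist_unique[OF j(2)] dx ws(3) by simp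
      then show False using j ki by simp
    qed
    show ?thesis using ws(3) dy dx y1 x2 yV ne1 ne2 by (simp add: P_def V2_def)
  qed
  have QF: "y = v \<and> dist_is V E x v (i+1) \<and> (x,z) \<in> P"
    if ki: "1 \<le> i" "i \<le> k" and mem: "(x,y,z) \<in> Qset V E i v" for i x y z
  proof -
    obtain ws where ws: "length ws = i" "x # ws @ [y, z] \<in> SIP V E" "y = v"
      using mem by (auto simp: Qset_def)
    define xs where "xs = x # ws @ [y, z]"
    have ind: "induced_path V E xs" and dx: "dist_is V E x z (i+2)" and zV: "z \<in> V"
      using ws(1,2) by (auto simp: SIP_def Nout_def xs_def)
    have dp: "dpath V E xs" using ind by (simp add: induced_path_def)
    have indI: "\<And>a b. a < length xs \<Longrightarrow> b < length xs \<Longrightarrow> (xs!a, xs!b) \<in> E \<Longrightarrow> b = Suc a"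
      using ind unfolding induced_path_def by blast
    have len: "length xs = i + 3" using ws by (simp add: xs_def)
    have n0: "xs ! 0 = x" and n1: "xs ! (Suc i) = v" and n2: "xs ! Suc (Suc i) = z"
      using ws by (simp_all add: xs_def nth_append)
    have "(xs ! Suc i, xs ! Suc (Suc i)) \<in> E" using dp len unfolding dpath_def by simp
    then have vz: "(v,z) \<in> E" using n1 n2 by simp
    have xV: "x \<in> V" using dp by (auto simp: dpath_def xs_def)
    have "path_len V E (xs ! 0) (xs ! Suc i) (Suc i - 0)"
      using path_len_sub[OF dp, of 0 "Suc i"] len by simp
    then have pxv: "path_len V E x v (i+1)" using n0 n1 by simp
    have "\<not> path_len V E x v l" if l: "l < i + 1" for l
    proof
      assume "path_len V E x v l"
      then obtain j where j: "j \<le> Suc l" "path_len V E x z j" using edge_post[OF vz EV] by blast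
      have "j < i + 2" using j(1) l by linarith
      then show False using dx j(2) unfolding dist_is_def by blast
    qed
    then have dxv: "dist_is V E x v (i+1)" using pxv by (simp add: dist_is_def)
    have x1: "x \<in> V1" using V1_iff xV dxv ki by auto
    have z2: "z \<notin> V1"
    proof
      assume "z \<in> V1"
      then obtain j where j: "1 \<le> j" "j \<le> k+1" "dist_is V E z v j" using V1_iff by blast
      have pzv: "path_len V E z v j" using j(3) by (simp add: dist_is_def)
      have "Suc j \<le> m" using j km by linarith
      then show False using cycle_false[OF mf vz pzv] by blast
    qed
    have ne1: "(x,z) \<notin> E"
    proof
      assume "(x,z) \<in> E"
      then have "(xs!0, xs!Suc (Suc i)) \<in> E" using n0 n2 by simp
      then have "Suc (Suc i) = Suc 0" using indI[of 0 "Suc (Suc i)"] len by simp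
      then show False by simp
    qed
    have ne2: "(z,x) \<notin> E"
    proof
      assume "(z,x) \<in> E"
      then have "(xs!Suc (Suc i), xs!0) \<in> E" using n0 n2 by simp
      then have "0 = Suc (Suc (Suc i))" using indI[of "Suc (Suc i)" 0] len by simp
      then show False by simp
    qed
    show ?thesis using ws(3) dxv x1 z2 zV ne1 ne2 by (simp add: P_def V2_def)
  qed
  define fR where "fR = (\<lambda>(x::'a,y::'a,z::'a). (y,x))"
  define fQ where "fQ = (\<lambda>(x::'a,y::'a,z::'a). (x,z))"
  have AR: "p \<in> P \<and> dist_is V E (fst p) v 1 \<and> dist_is V E (snd p) v (i+2)"
    if ki: "k \<le> i" and p: "p \<in> fR ` Rset V E i v" for i p
  proof -
    obtain x y z where "(x,y,z) \<in> Rset V E i v" "p = (y,x)" using p by (auto simp: fR_def)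
    then show ?thesis using RF[OF ki, of x y z] by simp
  qed
  have BQ: "p \<in> P \<and> dist_is V E (fst p) v (i+1)"
    if ki: "1 \<le> i" "i \<le> k" and p: "p \<in> fQ ` Qset V E i v" for i p
  proof -
    obtain x y z where "(x,y,z) \<in> Qset V E i v" "p = (x,z)" using p by (auto simp: fQ_def)
    then show ?thesis using QF[OF ki, of x y z] by simp
  qed
  have cR: "rk V E i v = card (fR ` Rset V E i v)" if ki: "k \<le> i" for i
  proof -
    have "inj_on fR (Rset V E i v)"
    proof (rule inj_onI)
      fix a b assume a: "a \<in> Rset V E i v" and b: "b \<in> Rset V E i v" and eq: "fR a = fR b"
      obtain x y z where a': "a = (x,y,z)" by (cases a)
      obtain x' y' z' where b': "b = (x',y',z')" by (cases b)
      have "z = v" using RF[OF ki, of x y z] a a' by simp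
      moreover have "z' = v" using RF[OF ki, of x' y' z'] b b' by simp
      ultimately show "a = b" using eq a' b' by (simp add: fR_def)
    qed
    then show ?thesis unfolding rk_def by (simp add: card_image)
  qed
  have cQ: "qk V E i v = card (fQ ` Qset V E i v)" if ki: "1 \<le> i" "i \<le> k" for i
  proof -
    have "inj_on fQ (Qset V E i v)"
    proof (rule inj_onI)
      fix a b assume a: "a \<in> Qset V E i v" and b: "b \<in> Qset V E i v" and eq: "fQ a = fQ b"
      obtain x y z where a': "a = (x,y,z)" by (cases a)
      obtain x' y' z' where b': "b = (x',y',z')" by (cases b)
      have "y = v" using QF[OF ki, of x y z] a a' by simp
      moreover have "y' = v" using QF[OF ki, of x' y' z'] b b' by simp
      ultimately show "a = b" using eq a' b' by (simp add: fQ_def)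
    qed
    then show ?thesis unfolding qk_def by (simp add: card_image)
  qed
  define UA where "UA = (\<Union>i\<in>{k..m-3}. fR ` Rset V E i v)"
  define UB where "UB = (\<Union>i\<in>{1..k}. fQ ` Qset V E i v)"
  have subA: "fR ` Rset V E i v \<subseteq> P" if "i \<in> {k..m-3}" for i using AR that by auto
  have subB: "fQ ` Qset V E i v \<subseteq> P" if "i \<in> {1..k}" for i using BQ that by auto
  have cardA: "card UA = (\<Sum>i\<in>{k..m-3}. card (fR ` Rset V E i v))"
    unfolding UA_def
  proof (rule card_UN_disjoint)
    show "finite {k..m-3}" by simp
    show "\<forall>i\<in>{k..m-3}. finite (fR ` Rset V E i v)" using subA finP finite_subset by blast
    show "\<forall>i\<in>{k..m-3}. \<forall>j\<in>{k..m-3}. i \<noteq> j \<longrightarrow> fR ` Rset V E i v \<inter> fR ` Rset V E j v = {}"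
    proof (intro ballI impI)
      fix i j assume i: "i \<in> {k..m-3}" and j: "j \<in> {k..m-3}" and ij: "i \<noteq> j"
      show "fR ` Rset V E i v \<inter> fR ` Rset V E j v = {}"
      proof (rule ccontr)
        assume "fR ` Rset V E i v \<inter> fR ` Rset V E j v \<noteq> {}"
        then obtain p where p: "p \<in> fR ` Rset V E i v" "p \<in> fR ` Rset V E j v" by blast
        have d1: "dist_is V E (snd p) v (i+2)" using AR[of i p] i p(1) by simp
        have d2: "dist_is V E (snd p) v (j+2)" using AR[of j p] j p(2) by simp
        show False using dist_unique[OF d1 d2] ij by simp
      qed
    qed
  qed
  have cardB: "card UB = (\<Sum>i\<in>{1..k}. card (fQ ` Qset V E i v))"
    unfolding UB_def
  proof (rule card_UN_disjoint)
    show "finite {1..k}" by simp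
    show "\<forall>i\<in>{1..k}. finite (fQ ` Qset V E i v)" using subB finP finite_subset by blast
    show "\<forall>i\<in>{1..k}. \<forall>j\<in>{1..k}. i \<noteq> j \<longrightarrow> fQ ` Qset V E i v \<inter> fQ ` Qset V E j v = {}"
    proof (intro ballI impI)
      fix i j assume i: "i \<in> {1..k}" and j: "j \<in> {1..k}" and ij: "i \<noteq> j"
      show "fQ ` Qset V E i v \<inter> fQ ` Qset V E j v = {}"
      proof (rule ccontr)
        assume "fQ ` Qset V E i v \<inter> fQ ` Qset V E j v \<noteq> {}"
        then obtain p where p: "p \<in> fQ ` Qset V E i v" "p \<in> fQ ` Qset V E j v" by blast
        have d1: "dist_is V E (fst p) v (i+1)" using BQ[of i p] i p(1) by simp
        have d2: "dist_is V E (fst p) v (j+1)" using BQ[of j p] j p(2) by simp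
        show False using dist_unique[OF d1 d2] ij by simp
      qed
    qed
  qed
  have disj: "UA \<inter> UB = {}"
  proof (rule ccontr)
    assume "UA \<inter> UB \<noteq> {}"
    then obtain p i j where i: "i \<in> {k..m-3}" "p \<in> fR ` Rset V E i v"
      and j: "j \<in> {1..k}" "p \<in> fQ ` Qset V E j v" unfolding UA_def UB_def by blast
    have d1: "dist_is V E (fst p) v 1" using AR[of i p] i by simp
    have d2: "dist_is V E (fst p) v (j+1)" using BQ[of j p] j by simp
    show False using dist_unique[OF d1 d2] j by simp
  qed
  have sub: "UA \<union> UB \<subseteq> P" using subA subB unfolding UA_def UB_def by blast
  have finU: "finite UA" "finite UB" using sub finP finite_subset by blast+
  have "tk m V E k v = card UA + card UB"
  proof -
    have "(\<Sum>i = k..m - 3. rk V E i v) = (\<Sum>i\<in>{k..m-3}. card (fR ` Rset V E i v))"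
      by (rule sum.cong) (simp_all add: cR)
    moreover have "(\<Sum>i = 1..k. qk V E i v) = (\<Sum>i\<in>{1..k}. card (fQ ` Qset V E i v))"
      by (rule sum.cong) (simp_all add: cQ)
    ultimately show ?thesis unfolding tk_def cardA cardB by simp
  qed
  also have "\<dots> = card (UA \<union> UB)" using card_Un_disjoint[OF finU disj] by simp
  also have "\<dots> \<le> card P" using card_mono[OF finP sub] .
  finally have part3: "tk m V E k v \<le> card P" .
  show ?thesis unfolding Let_def V1_def[symmetric] V2_def[symmetric]
    using part1 cardR' part3 by (simp add: P_def)
qed

end
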